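(* Let $A\in\mathbb{R}^{n\times m}$ have distinct columns with $a_1=0$, and let $S\subset\mathbb{R}^m$ be any set of SAGE-feasible slacks for $A$, i.e. a set such that for every $c\in\mathbb{R}^m$ the signomial $f=\mathrm{Sig}(A,c)$ satisfies $$f_{\mathsf{SAGE}}=\inf\{c^\top\exp(y): y\in\mathcal{R}(A^\top)+S\}.$$ Let $T(A)=\log\,\mathrm{cl}\,\mathrm{conv}\,\exp\mathcal{R}(A^\top)$ (the moment preimage). Then $C_{\mathrm{SAGE}}(A)=C_{\mathrm{NNS}}(A)$ if and only if $S\subset T(A)$.
   Context: For $c\in\mathbb{R}^m$, $\mathrm{Sig}(A,c)$ denotes $x\mapsto\sum_{i=1}^m c_i\exp(a_i^\top x)$. $C_{\mathrm{NNS}}(A)=\{c:\mathrm{Sig}(A,c)(x)\ge 0\ \forall x\in\mathbb{R}^n\}$, $C_{\mathrm{AGE}}(A,k)=\{c\in C_{\mathrm{NNS}}(A): c_i\ge 0\ \forall i\ne k\}$, $C_{\mathrm{SAGE}}(A)=\sum_{k=1}^m C_{\mathrm{AGE}}(A,k)$. For $f=\mathrm{Sig}(A,c)$ with $a_1=0$: $f_{\mathsf{SAGE}}=\sup\{\gamma\in\mathbb{R}: c-\gamma e_1\in C_{\mathrm{SAGE}}(A)\}$. $\mathcal{R}(A^\top)$ is the range of $A^\top$ in $\mathbb{R}^m$; $\exp$ and $\log$ act entrywise (with $\log 0=-\infty$) and elementwise on sets; $\mathrm{cl}\,\mathrm{conv}$ is the closed convex hull; $+$ between sets is the Minkowski sum.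 *)

theory Defs
  imports "HOL-Analysis.Analysis"
begin

text \<open>A real n x m matrix A is a value of type real^'m^'n (rows indexed by 'n,
columns by 'm). The i-th column a_i is column i A.\<close>

definition Sig :: "real^'m^'n \<Rightarrow> real^'m \<Rightarrow> real^'n \<Rightarrow> real" where
  "Sig A c x = (\<Sum>i\<in>UNIV. c $ i * exp (column i A \<bullet> x))"

definition C_NNS :: "real^'m^'n \<Rightarrow> (real^'m) set" where
  "C_NNS A = {c. \<forall>x. Sig A c x \<ge> 0}"

definition C_AGE :: "real^'m^'n \<Rightarrow> 'm \<Rightarrow> (real^'m) set" where
  "C_AGE A k = {c \<in> C_NNS A. \<forall>i. i \<noteq> k \<longrightarrow> c $ i \<ge> 0}"

definition C_SAGE :: "real^'m^'n \<Rightarrow> (real^'m) set" where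
  "C_SAGE A = {c. \<exists>f :: 'm \<Rightarrow> real^'m. (\<forall>k. f k \<in> C_AGE A k) \<and> c = (\<Sum>k\<in>UNIV. f k)}"

text \<open>f_SAGE for f = Sig(A,c), where k0 is the index with a_{k0} = 0 (the paper's index 1).
Value in the extended reals (sup of the empty set is -infinity).\<close>
definition f_SAGE :: "real^'m^'n \<Rightarrow> 'm \<Rightarrow> real^'m \<Rightarrow> ereal" where
  "f_SAGE A k0 c = Sup {ereal \<gamma> | \<gamma>. c - \<gamma> *\<^sub>R axis k0 1 \<in> C_SAGE A}"

definition vexp :: "real^'m \<Rightarrow> real^'m" where
  "vexp y = (\<chi> i. exp (y $ i))"

definition rangeAT :: "real^'m^'n \<Rightarrow> (real^'m) set" where
  "rangeAT A = range (\<lambda>x. transpose A *v x)"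

text \<open>Real points of the moment preimage T(A) = log cl conv exp R(A^T).\<close>
definition T_moment :: "real^'m^'n \<Rightarrow> (real^'m) set" where
  "T_moment A = {y. vexp y \<in> closure (convex hull (vexp ` rangeAT A))}"

end

theory Submission
  imports Defs
begin


definition Wv :: "real^'m^'n \<Rightarrow> real^'n \<Rightarrow> real^'m" where
  "Wv A x = (\<chi> i. exp (column i A \<bullet> x))"

lemma Sig_inner: "Sig A c x = c \<bullet> Wv A x"
  unfolding Sig_def Wv_def inner_vec_def by simp

lemma Wv_vexp: "Wv A x = vexp (transpose A *v x)"
  unfolding Wv_def vexp_def
  by (simp add: column_def transpose_def matrix_vector_mult_def inner_vec_def mult.commute)

lemma C_NNS_inner: "C_NNS A = {c. \<forall>x. 0 \<le> c \<bullet> Wv A x}"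
  unfolding C_NNS_def Sig_inner by simp

lemma NNS_add: "a \<in> C_NNS A \<Longrightarrow> b \<in> C_NNS A \<Longrightarrow> a + b \<in> C_NNS A"
  unfolding C_NNS_inner by (simp add: inner_add_left)

lemma NNS_scale: "a \<in> C_NNS A \<Longrightarrow> 0 \<le> t \<Longrightarrow> t *\<^sub>R a \<in> C_NNS A"
  unfolding C_NNS_inner by (simp add: inner_scaleR_left)

lemma NNS_sum: "(\<And>k. k \<in> K \<Longrightarrow> f k \<in> C_NNS A) \<Longrightarrow> sum f K \<in> C_NNS A"
  unfolding C_NNS_inner by (auto simp: inner_sum_left intro: sum_nonneg)

lemma closed_NNS: "closed (C_NNS A)"
proof -
  have "C_NNS A = (\<Inter>x. {c. 0 \<le> Wv A x \<bullet> c})"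
    unfolding C_NNS_inner by (auto simp: inner_commute)
  then show ?thesis by (auto intro!: closed_INT closed_halfspace_ge)
qed

lemma closed_AGE: "closed (C_AGE A k)"
proof -
  have "C_AGE A k = C_NNS A \<inter> (\<Inter>i\<in>{i. i \<noteq> k}. {c. c $ i \<ge> 0})"
    unfolding C_AGE_def by auto
  then show ?thesis
    by (auto intro!: closed_Int closed_INT closed_NNS closed_halfspace_component_ge_cart)
qed

lemma SAGE_sub_NNS: "C_SAGE A \<subseteq> C_NNS A"
  unfolding C_SAGE_def C_AGE_def by (auto intro!: NNS_sum)


definition good :: "real^'m \<Rightarrow> ('m \<Rightarrow> real^'m) \<Rightarrow> 'm \<Rightarrow> bool" where
  "good c f i \<longleftrightarrow> (0 \<le> c$i \<longrightarrow> (\<forall>k. 0 \<le> f k $ i)) \<and>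
     (c$i < 0 \<longrightarrow> f i $ i = c$i \<and> (\<forall>k. k \<noteq> i \<longrightarrow> f k $ i = 0))"

lemma step:
  fixes f :: "'m \<Rightarrow> real^'m"
  assumes age: "\<forall>k. f k \<in> C_AGE A k" and cs: "c = sum f UNIV"
    and gd: "\<forall>j\<in>I. good c f j" and iI: "i \<notin> I"
  shows "\<exists>g. (\<forall>k. g k \<in> C_AGE A k) \<and> c = sum g UNIV \<and> (\<forall>j\<in>insert i I. good c g j)"
proof -
  have off: "0 \<le> f k $ j" if "k \<noteq> j" for k j
    using age that unfolding C_AGE_def by auto
  have nns: "f k \<in> C_NNS A" for k using age unfolding C_AGE_def by auto
  define P where "P = (\<Sum>k\<in>UNIV-{i}. f k $ i)"
  have ci: "c$i = f i $ i + P"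
    unfolding P_def cs sum_component by (simp add: sum.remove)
  have P0: "0 \<le> P" unfolding P_def by (rule sum_nonneg) (auto intro: off)
  show ?thesis
  proof (cases "0 \<le> f i $ i")
    case True
    have "good c f i" unfolding good_def using True ci P0 off by (metis add_nonneg_nonneg not_le)
    then show ?thesis using age cs gd by auto
  next
    case False
    define D where "D = max P (- f i $ i)"
    define \<mu> where "\<mu> k = (if k = i then 1 - P/D else f k $ i / D)" for k
    define g where "g k = (if k = i then 0 else f k) + \<mu> k *\<^sub>R f i" for k
    have D0: "0 < D" using False unfolding D_def by auto
    have PD: "P \<le> D" and FD: "- f i $ i \<le> D" unfolding D_def by auto
    have mu0: "0 \<le> \<mu> k" for k
      using D0 PD off[of k i] unfolding \<mu>_def by (auto simp: field_simps)
    have musum: "(\<Sum>k\<in>UNIV. \<mu> k) = 1"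
    proof -
      have "(\<Sum>k\<in>UNIV. \<mu> k) = \<mu> i + (\<Sum>k\<in>UNIV-{i}. \<mu> k)" by (simp add: sum.remove)
      also have "(\<Sum>k\<in>UNIV-{i}. \<mu> k) = (\<Sum>k\<in>UNIV-{i}. f k $ i / D)"
        by (rule sum.cong) (auto simp: \<mu>_def)
      also have "\<dots> = P / D" unfolding P_def by (simp add: sum_divide_distrib)
      finally show ?thesis unfolding \<mu>_def by simp
    qed
    have gsum: "sum g UNIV = c"
    proof -
      have "sum g UNIV = (\<Sum>k\<in>UNIV. (if k = i then 0 else f k)) + (\<Sum>k\<in>UNIV. \<mu> k) *\<^sub>R f i"
        unfolding g_def by (simp add: sum.distrib scaleR_sum_left)
      also have "(\<Sum>k\<in>UNIV. (if k = i then 0 else f k)) = sum f (UNIV - {i})"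
        by (simp add: sum.If_cases Diff_eq Compl_eq)
      also have "\<dots> = sum f UNIV - f i" by (simp add: sum_diff1)
      finally show ?thesis using musum cs by simp
    qed
    have gcomp: "g k $ j = (if k = i then 0 else f k $ j) + \<mu> k * f i $ j" for k j
      unfolding g_def by simp
    have coli: "g k $ i = f k $ i * ((D + f i $ i) / D)" if "k \<noteq> i" for k
      using that D0 unfolding gcomp \<mu>_def by (simp add: field_simps)
    have gii: "g i $ i = (1 - P/D) * f i $ i" unfolding gcomp \<mu>_def by simp
    have ageg: "g k \<in> C_AGE A k" for k
    proof -
      have z0: "(0::real^'m) \<in> C_NNS A" by (simp add: C_NNS_inner)
      have "(if k = i then 0 else f k) \<in> C_NNS A" using z0 nns by auto
      then have "g k \<in> C_NNS A" unfolding g_def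
        by (rule NNS_add) (auto intro!: NNS_scale mu0 nns)
      moreover have "0 \<le> g k $ j" if "j \<noteq> k" for j
      proof (cases "j = i")
        case True
        then have "k \<noteq> i" using that by auto
        then show ?thesis using coli[of k] True off[of k i] D0 FD
          by (simp add: divide_nonneg_pos)
      next
        case False
        then show ?thesis unfolding gcomp using off[of i j] off[of k j] that mu0[of k]
          by (auto intro!: add_nonneg_nonneg mult_nonneg_nonneg)
      qed
      ultimately show ?thesis unfolding C_AGE_def by auto
    qed
    have goodI: "good c g j" if "j \<in> I" for j
    proof -
      have ji: "j \<noteq> i" using that iI by auto
      have gj: "good c f j" using gd that by auto
      show ?thesis unfolding good_def
      proof (intro conjI impI allI)
        fix k assume "0 \<le> c $ j"
        then have "\<forall>k. 0 \<le> f k $ j" using gj unfolding good_def by auto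
        then show "0 \<le> g k $ j" unfolding gcomp using mu0[of k]
          by (auto intro!: add_nonneg_nonneg mult_nonneg_nonneg)
      next
        assume neg: "c $ j < 0"
        then have fij: "f i $ j = 0" and fjj: "f j $ j = c $ j" and oth: "\<forall>k. k \<noteq> j \<longrightarrow> f k $ j = 0"
          using gj ji unfolding good_def by auto
        show "g j $ j = c $ j" unfolding gcomp using fij fjj ji by simp
        fix k assume "k \<noteq> j"
        then show "g k $ j = 0" unfolding gcomp using fij oth by simp
      qed
    qed
    have goodi: "good c g i" unfolding good_def
    proof (intro conjI impI allI)
      fix k assume pos: "0 \<le> c $ i"
      then have "D = P" using ci unfolding D_def by auto
      then have "g i $ i = 0" using gii D0 by simp
      moreover have "0 \<le> g k $ i" if "k \<noteq> i"
        using coli[OF that] off[of k i] that D0 FD by (simp add: divide_nonneg_pos)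
      ultimately show "0 \<le> g k $ i" by (cases "k = i") auto
    next
      assume neg: "c $ i < 0"
      then have DD: "D = - f i $ i" using ci unfolding D_def by auto
      show "g i $ i = c $ i" unfolding gii ci DD using False by (simp add: field_simps)
      fix k assume "k \<noteq> i"
      then show "g k $ i = 0" using coli DD by simp
    qed
    show ?thesis using ageg gsum goodI goodi by auto
  qed
qed


lemma normal:
  assumes "c \<in> C_SAGE A"
  shows "\<exists>f. (\<forall>k. f k \<in> C_AGE A k) \<and> c = sum f UNIV \<and> (\<forall>j. good c f j)"
proof -
  have "\<exists>f. (\<forall>k. f k \<in> C_AGE A k) \<and> c = sum f UNIV \<and> (\<forall>j\<in>I. good c f j)" if "finite I" for I :: "'a set"
    using that
  proof (induction rule: finite_induct)
    case empty
    then show ?case using assms unfolding C_SAGE_def by auto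
  next
    case (insert i I)
    then obtain f where "\<forall>k. f k \<in> C_AGE A k" "c = sum f UNIV" "\<forall>j\<in>I. good c f j" by auto
    then show ?case using step[of f A c I i] insert(2) by auto
  qed
  from this[of UNIV] show ?thesis by auto
qed

lemma bound:
  assumes age: "\<forall>k. f k \<in> C_AGE A k" and cs: "c = sum f UNIV" and gd: "good c f j"
  shows "\<bar>f k $ j\<bar> \<le> \<bar>c $ j\<bar>"
proof (cases "0 \<le> c $ j")
  case True
  then have nn: "\<forall>k. 0 \<le> f k $ j" using gd unfolding good_def by auto
  have "f k $ j \<le> (\<Sum>k\<in>UNIV. f k $ j)" by (rule member_le_sum) (auto simp: nn)
  then show ?thesis using nn True cs by (simp add: sum_component)
next
  case False
  then show ?thesis using gd unfolding good_def by (cases "k = j") auto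
qed

lemma closed_SAGE: "closed (C_SAGE (A::real^'m^'n))"
  unfolding closed_sequential_limits
proof (intro allI impI, elim conjE)
  fix x :: "nat \<Rightarrow> real^'m" and l
  assume xs: "\<forall>n. x n \<in> C_SAGE A" and lim: "x \<longlonglongrightarrow> l"
  have "\<forall>n. \<exists>f. (\<forall>k. f k \<in> C_AGE A k) \<and> x n = sum f UNIV \<and> (\<forall>j. good (x n) f j)"
    using xs normal by blast
  then obtain F where F: "\<And>n k. F n k \<in> C_AGE A k" "\<And>n. x n = sum (F n) UNIV"
    "\<And>n j. good (x n) (F n) j" by metis
  have "bounded (range x)" using lim by (rule convergent_imp_bounded)
  then obtain M where M: "\<And>n. norm (x n) \<le> M" unfolding bounded_iff by auto
  have cb: "\<bar>F n k $ j\<bar> \<le> M" for n k j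
    using bound[where f="F n" and A=A and c="x n" and j=j and k=k] F M[of n] component_le_norm_cart[of "x n" j] by auto
  define G where "G n = (\<chi> k. F n k)" for n
  have nG: "norm (G n) \<le> of_nat CARD('m) * (of_nat CARD('m) * M)" for n
  proof -
    have "norm (G n) \<le> (\<Sum>k\<in>UNIV. norm (G n $ k))"
      unfolding norm_vec_def by (rule L2_set_le_sum) auto
    also have "\<dots> \<le> (\<Sum>k\<in>(UNIV::'m set). of_nat CARD('m) * M)"
    proof (rule sum_mono)
      fix k
      have "norm (G n $ k) \<le> (\<Sum>j\<in>UNIV. \<bar>F n k $ j\<bar>)" unfolding G_def using norm_le_l1_cart by simp
      also have "\<dots> \<le> (\<Sum>j\<in>(UNIV::'m set). M)" by (rule sum_mono) (rule cb)
      finally show "norm (G n $ k) \<le> of_nat CARD('m) * M" by simp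
    qed
    finally show ?thesis by simp
  qed
  then have "bounded (range G)" unfolding bounded_iff by auto
  then obtain L r where r: "strict_mono r" and GL: "(G \<circ> r) \<longlonglongrightarrow> L"
    using bounded_imp_convergent_subsequence by blast
  have Lk: "(\<lambda>n. F (r n) k) \<longlonglongrightarrow> L $ k" for k
    using tendsto_vec_nth[OF GL, of k] unfolding G_def by (simp add: o_def)
  have LA: "L $ k \<in> C_AGE A k" for k
    by (rule closed_sequentially[OF closed_AGE _ Lk[of k]]) (rule F(1))
  have "(\<lambda>n. sum (F (r n)) UNIV) \<longlonglongrightarrow> (\<Sum>k\<in>UNIV. L $ k)"
    by (rule tendsto_sum) (rule Lk)
  moreover have "(\<lambda>n. sum (F (r n)) UNIV) \<longlonglongrightarrow> l"
    using LIMSEQ_subseq_LIMSEQ[OF lim r] F(2) by (simp add: o_def)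
  ultimately have "l = (\<Sum>k\<in>UNIV. L $ k)" using LIMSEQ_unique by blast
  then show "l \<in> C_SAGE A" unfolding C_SAGE_def using LA by blast
qed


lemma axis_Wv: "column k0 A = 0 \<Longrightarrow> axis k0 1 \<bullet> Wv A x = 1"
  unfolding Wv_def inner_axis' by simp

lemma SAGE_mono:
  fixes A :: "real^'m^'n"
  assumes a1: "column k0 A = 0" and d: "d \<in> C_SAGE A" and t: "0 \<le> t"
  shows "d + t *\<^sub>R axis k0 1 \<in> C_SAGE A"
proof -
  obtain f where f: "\<forall>k. f k \<in> C_AGE A k" "d = sum f UNIV" using d unfolding C_SAGE_def by auto
  define g where "g k = f k + (if k = k0 then t *\<^sub>R axis k0 1 else 0)" for k
  have "sum g UNIV = d + t *\<^sub>R axis k0 1"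
    unfolding g_def f(2) by (simp add: sum.distrib)
  moreover have "g k \<in> C_AGE A k" for k
  proof -
    have ax: "t *\<^sub>R axis k0 1 \<in> C_NNS A" using axis_Wv[OF a1] t
      unfolding C_NNS_inner by (simp add: inner_scaleR_left)
    have z0: "(0::real^'m) \<in> C_NNS A" by (simp add: C_NNS_inner)
    have fk: "f k \<in> C_NNS A" using f(1) unfolding C_AGE_def by auto
    have "(if k = k0 then t *\<^sub>R axis k0 1 else 0) \<in> C_NNS A" using ax z0 by simp
    then have "g k \<in> C_NNS A" unfolding g_def using fk by (rule NNS_add[rotated])
    moreover have "0 \<le> g k $ i" if "i \<noteq> k" for i
    proof -
      have "0 \<le> f k $ i" using f(1) that unfolding C_AGE_def by auto
      moreover have "0 \<le> (if k = k0 then t *\<^sub>R axis k0 (1::real) else 0) $ i"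
        using t by (auto simp: axis_def)
      ultimately show ?thesis unfolding g_def by simp
    qed
    ultimately show ?thesis unfolding C_AGE_def by auto
  qed
  ultimately show ?thesis unfolding C_SAGE_def by (intro CollectI exI[of _ g]) auto
qed

lemma vexp_add: "vexp (r + s) $ i = exp (r $ i) * exp (s $ i)"
  unfolding vexp_def by (simp add: exp_add)

lemma rangeAT_iff: "y \<in> rangeAT A \<longleftrightarrow> (\<exists>x. y = transpose A *v x)"
  unfolding rangeAT_def by auto

lemma Wv_in_K: "Wv A x \<in> closure (convex hull (vexp ` rangeAT A))"
proof -
  have "Wv A x \<in> vexp ` rangeAT A" unfolding Wv_vexp rangeAT_def by auto
  also have "vexp ` rangeAT A \<subseteq> convex hull (vexp ` rangeAT A)" by (rule hull_subset)
  also have "\<dots> \<subseteq> closure (convex hull (vexp ` rangeAT A))" by (rule closure_subset)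
  finally show ?thesis .
qed


theorem mainTheorem20:
  fixes A :: "real^'m^'n" and k0 :: 'm and S :: "(real^'m) set"
  assumes distinct_cols: "inj (\<lambda>i. column i A)"
    and a1_zero: "column k0 A = 0"
    and slacks: "\<forall>c :: real^'m. f_SAGE A k0 c =
        Inf {ereal (c \<bullet> vexp y) | y. y \<in> {r + s | r s. r \<in> rangeAT A \<and> s \<in> S}}"
  shows "C_SAGE A = C_NNS A \<longleftrightarrow> S \<subseteq> T_moment A"
proof
  assume eq: "C_SAGE A = C_NNS A"
  show "S \<subseteq> T_moment A"
  proof
    fix s assume sS: "s \<in> S"
    show "s \<in> T_moment A"
    proof (rule ccontr)
      assume "s \<notin> T_moment A"
      then have nK: "vexp s \<notin> closure (convex hull (vexp ` rangeAT A))"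
        unfolding T_moment_def by auto
      obtain a b where ab: "a \<bullet> vexp s < b"
        "\<forall>z\<in>closure (convex hull (vexp ` rangeAT A)). b < a \<bullet> z"
        using separating_hyperplane_closed_point[OF convex_closure[OF convex_convex_hull] closed_closure nK]
        by blast
      have "a - b *\<^sub>R axis k0 1 \<in> C_NNS A"
        unfolding C_NNS_inner
      proof (intro CollectI allI)
        fix x
        have "b < a \<bullet> Wv A x" using ab(2) Wv_in_K by blast
        then show "0 \<le> (a - b *\<^sub>R axis k0 1) \<bullet> Wv A x"
          using axis_Wv[OF a1_zero, of x] by (simp add: inner_diff_left)
      qed
      then have "a - b *\<^sub>R axis k0 1 \<in> C_SAGE A" using eq by simp
      then have "ereal b \<le> f_SAGE A k0 a" unfolding f_SAGE_def
        by (intro Sup_upper) blast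
      moreover have "f_SAGE A k0 a \<le> ereal (a \<bullet> vexp s)"
      proof -
        have z: "0 \<in> rangeAT A" unfolding rangeAT_def by (auto intro: range_eqI[of _ _ 0])
        have "ereal (a \<bullet> vexp (0 + s)) \<in> {ereal (a \<bullet> vexp y) | y. y \<in> {r + s | r s. r \<in> rangeAT A \<and> s \<in> S}}"
          using z sS by blast
        then show ?thesis using slacks by (auto intro: Inf_lower)
      qed
      ultimately have "ereal b \<le> ereal (a \<bullet> vexp s)" by (rule order_trans)
      then show False using ab(1) by simp
    qed
  qed
next
  assume sub: "S \<subseteq> T_moment A"
  show "C_SAGE A = C_NNS A"
  proof
    show "C_SAGE A \<subseteq> C_NNS A" by (rule SAGE_sub_NNS)
    show "C_NNS A \<subseteq> C_SAGE A"
    proof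
      fix c assume cN: "c \<in> C_NNS A"
      have nonneg: "0 \<le> c \<bullet> vexp (r + s)" if r: "r \<in> rangeAT A" and s: "s \<in> S" for r s
      proof -
        obtain x0 where x0: "r = transpose A *v x0" using r unfolding rangeAT_def by auto
        define c' where "c' = (\<chi> i. c $ i * exp (r $ i))"
        have eqc: "c' \<bullet> vexp y = c \<bullet> vexp (r + y)" for y
          unfolding c'_def inner_vec_def by (simp add: vexp_def mult.assoc exp_add)
        have E: "vexp ` rangeAT A \<subseteq> {z. 0 \<le> c' \<bullet> z}"
        proof
          fix z assume "z \<in> vexp ` rangeAT A"
          then obtain x where z: "z = vexp (transpose A *v x)" unfolding rangeAT_def by auto
          have "r + transpose A *v x = transpose A *v (x0 + x)"
            unfolding x0 by (simp add: matrix_vector_right_distrib)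
          then have "c' \<bullet> z = c \<bullet> Wv A (x0 + x)" unfolding z eqc Wv_vexp by simp
          then show "z \<in> {z. 0 \<le> c' \<bullet> z}" using cN unfolding C_NNS_inner by auto
        qed
        have "convex hull (vexp ` rangeAT A) \<subseteq> {z. 0 \<le> c' \<bullet> z}"
          using E convex_halfspace_ge[of 0 c'] by (rule hull_minimal)
        then have "closure (convex hull (vexp ` rangeAT A)) \<subseteq> {z. 0 \<le> c' \<bullet> z}"
          by (rule closure_minimal[OF _ closed_halfspace_ge])
        moreover have "vexp s \<in> closure (convex hull (vexp ` rangeAT A))"
          using sub s unfolding T_moment_def by auto
        ultimately have "0 \<le> c' \<bullet> vexp s" by auto
        then show ?thesis using eqc by simp
      qed
      have fs: "0 \<le> f_SAGE A k0 c"
        unfolding slacks[rule_format]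
        by (rule Inf_greatest) (auto intro!: nonneg)
      have near: "c + e *\<^sub>R axis k0 1 \<in> C_SAGE A" if e: "0 < e" for e
      proof -
        have "\<exists>\<gamma>. c - \<gamma> *\<^sub>R axis k0 1 \<in> C_SAGE A \<and> - e < \<gamma>"
        proof (rule ccontr)
          assume "\<not> ?thesis"
          then have "\<forall>z\<in>{ereal \<gamma> | \<gamma>. c - \<gamma> *\<^sub>R axis k0 1 \<in> C_SAGE A}. z \<le> ereal (- e)"
            by auto
          then have "f_SAGE A k0 c \<le> ereal (- e)" unfolding f_SAGE_def by (intro Sup_least) blast
          then have "(0::ereal) \<le> ereal (- e)" using fs by (rule order_trans[rotated])
          then show False using e by (simp add: zero_ereal_def)
        qed
        then obtain \<gamma> where g: "c - \<gamma> *\<^sub>R axis k0 1 \<in> C_SAGE A" "- e < \<gamma>" by auto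
        have "(c - \<gamma> *\<^sub>R axis k0 1) + (\<gamma> + e) *\<^sub>R axis k0 1 \<in> C_SAGE A"
          using SAGE_mono[OF a1_zero g(1)] g(2) by simp
        then show ?thesis by (simp add: algebra_simps)
      qed
      have lim: "(\<lambda>n. c + inverse (real (Suc n)) *\<^sub>R axis k0 1) \<longlonglongrightarrow> c"
        using tendsto_add[OF tendsto_const tendsto_scaleR[OF LIMSEQ_inverse_real_of_nat tendsto_const], of c "axis k0 1"]
        by simp
      show "c \<in> C_SAGE A"
        by (rule closed_sequentially[OF closed_SAGE _ lim]) (auto intro: near)
    qed
  qed
qed

end
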